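(* Every Hopfian group $G$ has the $d$-equality property: if $H$ is a group with $G\leqslant^d H$ and $H\leqslant^d G$, then $H\cong G$.
   Context: For groups, $X\leqslant^d Y$ means there exist homomorphisms $f:X\to Y$ and $g:Y\to X$ with $g\circ f=\mathrm{id}_X$. A group is Hopfian if every surjective endomorphism of it is an automorphism. *)

theory Defs
  imports "HOL-Algebra.Algebra"
begin

definition d_le :: "('a, 'c) monoid_scheme \<Rightarrow> ('b, 'd) monoid_scheme \<Rightarrow> bool" where
  "d_le A B \<longleftrightarrow> (\<exists>f \<in> hom A B. \<exists>r \<in> hom B A. \<forall>a \<in> carrier A. r (f a) = a)"

definition hopfian :: "('a, 'c) monoid_scheme \<Rightarrow> bool" where
  "hopfian A \<longleftrightarrow> (\<forall>h \<in> hom A A. h ` carrier A = carrier A \<longrightarrow> h \<in> iso A A)"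

end

theory Submission
  imports Defs
begin

theorem proposition3p2:
  fixes G :: "('a, 'c) monoid_scheme" and H :: "('b, 'd) monoid_scheme"
  assumes "group G" and "hopfian G"
    and "group H" and "d_le G H" and "d_le H G"
  shows "H \<cong> G"
proof -
  obtain f1 r1 where f1: "f1 \<in> hom G H" and r1: "r1 \<in> hom H G" and fr1: "\<forall>a \<in> carrier G. r1 (f1 a) = a"
    using assms(4) unfolding d_le_def by blast
  obtain f2 r2 where f2: "f2 \<in> hom H G" and r2: "r2 \<in> hom G H" and fr2: "\<forall>a \<in> carrier H. r2 (f2 a) = a"
    using assms(5) unfolding d_le_def by blast
  have hc: "(\<lambda>x. r1 (r2 x)) \<in> hom G G"
    using r1 r2 unfolding hom_def by (auto simp: Pi_iff)
  have r2im: "r2 ` carrier G = carrier H"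
  proof
    show "r2 ` carrier G \<subseteq> carrier H" using r2 unfolding hom_def by auto
    show "carrier H \<subseteq> r2 ` carrier G"
    proof
      fix y assume y: "y \<in> carrier H"
      have "f2 y \<in> carrier G" using f2 y unfolding hom_def by auto
      then show "y \<in> r2 ` carrier G" using fr2 y by force
    qed
  qed
  have r1im: "r1 ` carrier H = carrier G"
  proof
    show "r1 ` carrier H \<subseteq> carrier G" using r1 unfolding hom_def by auto
    show "carrier G \<subseteq> r1 ` carrier H"
    proof
      fix y assume y: "y \<in> carrier G"
      have "f1 y \<in> carrier H" using f1 y unfolding hom_def by auto
      then show "y \<in> r1 ` carrier H" using fr1 y by force
    qed
  qed
  have "(\<lambda>x. r1 (r2 x)) ` carrier G = carrier G"
  proof -
    have "(\<lambda>x. r1 (r2 x)) ` carrier G = r1 ` (r2 ` carrier G)" by (simp add: image_image)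
    then show ?thesis using r1im r2im by simp
  qed
  then have "(\<lambda>x. r1 (r2 x)) \<in> iso G G" using assms(2) hc unfolding hopfian_def by blast
  then have "inj_on (\<lambda>x. r1 (r2 x)) (carrier G)" unfolding iso_def bij_betw_def by blast
  then have "inj_on r2 (carrier G)" by (intro inj_on_imageI2[of r1]) (simp add: comp_def)
  then have "r2 \<in> iso G H" using r2 r2im unfolding iso_def bij_betw_def by blast
  then have "G \<cong> H" unfolding is_iso_def by blast
  then show ?thesis by (rule group.iso_sym[OF assms(1)])
qed

end
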